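(* No strategy proof and deterministic mechanism for locating two facilities on $[0,1]$ has approximation ratio smaller than $\frac{30}{29}$ for the optimal complemented Gini index of utilities.
   Context: Agents $1,\dots,n$ report locations $x_1,\dots,x_n\in[0,1]$; a deterministic mechanism maps each profile to a placement of two facilities $y_1,y_2\in[0,1]$. Agent $i$'s distance is $d_i=\min(|x_i-y_1|,|x_i-y_2|)$ and utility $u_i=1-d_i$. The Gini index of utilities is $G_u=\frac{\sum_i\sum_j|u_i-u_j|}{2n\sum_i u_i}$ and the complemented Gini index is $1-G_u$. A mechanism is strategy proof if no agent, by reporting a false location, can strictly reduce the distance from its true location to the nearest facility. The approximation ratio of a mechanism $M$ is the supremum over all profiles $x$ of $\mathrm{OPT}(x)/(1-G_u(M(x)))$, where $\mathrm{OPT}(x)$ is the maximum of $1-G_u$ over all placements of two facilities in $[0,1]$. *)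

theory Defs
  imports Complex_Main "HOL-Library.Extended_Real"
begin

definition valid_profile :: "real list \<Rightarrow> bool" where
  "valid_profile xs \<longleftrightarrow> xs \<noteq> [] \<and> (\<forall>x \<in> set xs. 0 \<le> x \<and> x \<le> 1)"

definition dist_fac :: "real \<Rightarrow> real \<times> real \<Rightarrow> real" where
  "dist_fac x y = min \<bar>x - fst y\<bar> \<bar>x - snd y\<bar>"

definition util :: "real list \<Rightarrow> real \<times> real \<Rightarrow> nat \<Rightarrow> real" where
  "util xs y i = 1 - dist_fac (xs ! i) y"

definition gini :: "real list \<Rightarrow> real \<times> real \<Rightarrow> real" where
  "gini xs y = (let n = length xs in
     (\<Sum>i<n. \<Sum>j<n. \<bar>util xs y i - util xs y j\<bar>) /
       (2 * real n * (\<Sum>i<n. util xs y i)))"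

definition cgini :: "real list \<Rightarrow> real \<times> real \<Rightarrow> real" where
  "cgini xs y = 1 - gini xs y"

definition placements :: "(real \<times> real) set" where
  "placements = {y. 0 \<le> fst y \<and> fst y \<le> 1 \<and> 0 \<le> snd y \<and> snd y \<le> 1}"

definition OPT :: "real list \<Rightarrow> real" where
  "OPT xs = (SUP y \<in> placements. cgini xs y)"

definition mechanism :: "(real list \<Rightarrow> real \<times> real) \<Rightarrow> bool" where
  "mechanism M \<longleftrightarrow> (\<forall>xs. valid_profile xs \<longrightarrow> M xs \<in> placements)"

definition strategy_proof :: "(real list \<Rightarrow> real \<times> real) \<Rightarrow> bool" where
  "strategy_proof M \<longleftrightarrow>
     (\<forall>xs i x'. valid_profile xs \<longrightarrow> i < length xs \<longrightarrow> 0 \<le> x' \<longrightarrow> x' \<le> 1 \<longrightarrow>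
        dist_fac (xs ! i) (M xs) \<le> dist_fac (xs ! i) (M (xs[i := x'])))"

definition approx_ratio :: "(real list \<Rightarrow> real \<times> real) \<Rightarrow> ereal" where
  "approx_ratio M = (SUP xs \<in> {xs. valid_profile xs}. ereal (OPT xs / cgini xs (M xs)))"

end

theory Submission imports Defs begin

lemma gini3: "gini [p,q,r] y = (let a = 1 - dist_fac p y; b = 1 - dist_fac q y; c = 1 - dist_fac r y in
   (2*\<bar>a-b\<bar> + 2*\<bar>a-c\<bar> + 2*\<bar>b-c\<bar>) / (6*(a+b+c)))"
  unfolding gini_def util_def Let_def
  by (simp add: eval_nat_numeral abs_minus_commute algebra_simps)

lemma dist_le1: "0 \<le> x \<Longrightarrow> x \<le> 1 \<Longrightarrow> y \<in> placements \<Longrightarrow> dist_fac x y \<le> 1"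
  unfolding dist_fac_def placements_def by (auto simp: min_def abs_real_def)

lemma dist_ge0: "dist_fac x y \<ge> 0"
  unfolding dist_fac_def by auto

lemma gini3_bounds:
  assumes "0 \<le> p" "p \<le> 1" "0 \<le> q" "q \<le> 1" "0 \<le> r" "r \<le> 1" "y \<in> placements"
  shows "0 \<le> gini [p,q,r] y" "gini [p,q,r] y \<le> 2/3"
proof -
  define a where "a = 1 - dist_fac p y"
  define b where "b = 1 - dist_fac q y"
  define c where "c = 1 - dist_fac r y"
  have a: "0 \<le> a" "b \<ge> 0" "c \<ge> 0"
    using dist_le1[OF assms(1,2,7)] dist_le1[OF assms(3,4,7)] dist_le1[OF assms(5,6,7)]
    unfolding a_def b_def c_def by simp_all
  have g: "gini [p,q,r] y = (2*\<bar>a-b\<bar> + 2*\<bar>a-c\<bar> + 2*\<bar>b-c\<bar>) / (6*(a+b+c))"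
    unfolding gini3 a_def b_def c_def Let_def ..
  show "0 \<le> gini [p,q,r] y" unfolding g using a by simp
  show "gini [p,q,r] y \<le> 2/3"
  proof (cases "a+b+c = 0")
    case True then show ?thesis unfolding g by simp
  next
    case False
    then have "a+b+c > 0" using a by linarith
    moreover have "2*\<bar>a-b\<bar> + 2*\<bar>a-c\<bar> + 2*\<bar>b-c\<bar> \<le> 4*(a+b+c)" using a by (simp add: abs_real_def)
    ultimately show ?thesis unfolding g by (simp add: divide_le_eq)
  qed
qed

lemma OPT_ge1:
  assumes "0 \<le> p" "p \<le> 1" "0 \<le> q" "q \<le> 1" "0 \<le> r" "r \<le> 1" "yy \<in> placements"
    "cgini [p,q,r] yy = 1"
  shows "OPT [p,q,r] \<ge> 1"
proof -
  have "bdd_above (cgini [p,q,r] ` placements)"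
    by (rule bdd_aboveI[where M=1]) (use gini3_bounds[OF assms(1-6)] in \<open>auto simp: cgini_def\<close>)
  then have "cgini [p,q,r] yy \<le> OPT [p,q,r]" unfolding OPT_def by (rule cSUP_upper[OF assms(7)])
  then show ?thesis using assms(8) by simp
qed

lemma good3:
  assumes "0 \<le> p" "p \<le> 1" "0 \<le> q" "q \<le> 1" "0 \<le> r" "r \<le> 1" "y \<in> placements"
    "OPT [p,q,r] \<ge> 1" "OPT [p,q,r] / cgini [p,q,r] y < 30/29" "dist_fac q y < 1"
  shows "10*(\<bar>dist_fac p y - dist_fac q y\<bar> + \<bar>dist_fac p y - dist_fac r y\<bar> + \<bar>dist_fac q y - dist_fac r y\<bar>)
     < 3 - dist_fac p y - dist_fac q y - dist_fac r y"
proof -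
  define a where "a = 1 - dist_fac p y"
  define b where "b = 1 - dist_fac q y"
  define c where "c = 1 - dist_fac r y"
  have a: "0 \<le> a" "b > 0" "c \<ge> 0"
    using dist_le1[OF assms(1,2,7)] assms(10) dist_le1[OF assms(5,6,7)]
    unfolding a_def b_def c_def by simp_all
  have g: "gini [p,q,r] y = (2*\<bar>a-b\<bar> + 2*\<bar>a-c\<bar> + 2*\<bar>b-c\<bar>) / (6*(a+b+c))"
    unfolding gini3 a_def b_def c_def Let_def ..
  have cg: "cgini [p,q,r] y > 0" using gini3_bounds[OF assms(1-7)] unfolding cgini_def by linarith
  have "1 < 30/29 * cgini [p,q,r] y" using assms(8,9) cg by (simp add: divide_less_eq)
  then have "gini [p,q,r] y < 1/30" unfolding cgini_def by simp
  then have "(2*\<bar>a-b\<bar> + 2*\<bar>a-c\<bar> + 2*\<bar>b-c\<bar>) < 1/30 * (6*(a+b+c))"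
    unfolding g using a by (simp add: divide_less_eq)
  then show ?thesis unfolding a_def b_def c_def by (simp add: abs_minus_commute algebra_simps)
qed

lemma L2:
  fixes y1 y2 :: real
  assumes "0 \<le> y1" "y1 \<le> y2" "y2 \<le> 1"
  and "10*(\<bar>d0-d1\<bar>+\<bar>d0-d2\<bar>+\<bar>d1-d2\<bar>) < 3 - d0 - d1 - d2"
  and "d0 = min \<bar>0-y1\<bar> \<bar>0-y2\<bar>" "d1 = min \<bar>1/4-y1\<bar> \<bar>1/4-y2\<bar>" "d2 = min \<bar>1-y1\<bar> \<bar>1-y2\<bar>"
  shows "d1 > 3/52"
  using assms by (auto simp: min_def abs_real_def split: if_splits)

lemma L1:
  fixes y1 y2 :: real
  assumes "0 \<le> y1" "y1 \<le> y2" "y2 \<le> 1"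
  and "10*(\<bar>d0-d1\<bar>+\<bar>d0-d2\<bar>+\<bar>d1-d2\<bar>) < 3 - d0 - d1 - d2"
  and "d0 = min \<bar>0-y1\<bar> \<bar>0-y2\<bar>" "d1 = min \<bar>1/2-y1\<bar> \<bar>1/2-y2\<bar>" "d2 = min \<bar>3/4-y1\<bar> \<bar>3/4-y2\<bar>"
  shows "d2 > 3/52"
  using assms by (auto simp: min_def abs_real_def split: if_splits)

lemma LP:
  fixes y1 y2 :: real
  assumes "0 \<le> y1" "y1 \<le> y2" "y2 \<le> 1"
  and "10*(\<bar>d0-d1\<bar>+\<bar>d0-d2\<bar>+\<bar>d1-d2\<bar>) < 3 - d0 - d1 - d2"
  and "d0 = min \<bar>0-y1\<bar> \<bar>0-y2\<bar>" "d1 = min \<bar>1/2-y1\<bar> \<bar>1/2-y2\<bar>" "d2 = min \<bar>1-y1\<bar> \<bar>1-y2\<bar>"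
  and "min \<bar>1/4-y1\<bar> \<bar>1/4-y2\<bar> > 3/52" "min \<bar>3/4-y1\<bar> \<bar>3/4-y2\<bar> > 3/52"
  shows False
  using assms by (auto simp: min_def abs_real_def split: if_splits)

lemma sortpl:
  assumes "y \<in> placements"
  obtains y1 y2 :: real where "0 \<le> y1" "y1 \<le> y2" "y2 \<le> 1"
    "\<And>x. dist_fac x y = min \<bar>x-y1\<bar> \<bar>x-y2\<bar>"
proof (cases "fst y \<le> snd y")
  case True
  then show ?thesis using assms that[of "fst y" "snd y"] unfolding placements_def dist_fac_def by auto
next
  case False
  then show ?thesis using assms that[of "snd y" "fst y"] unfolding placements_def dist_fac_def
    by (auto simp: min.commute)
qed

lemma mid_lt1: "y \<in> placements \<Longrightarrow> 0 < x \<Longrightarrow> x < 1 \<Longrightarrow> dist_fac x y < 1"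
  unfolding placements_def dist_fac_def by (auto simp: min_def abs_real_def)

theorem theorem8:
  fixes M :: "real list \<Rightarrow> real \<times> real"
  assumes "mechanism M" and "strategy_proof M"
  shows "approx_ratio M \<ge> ereal (30 / 29)"
proof (rule ccontr)
  assume "\<not> approx_ratio M \<ge> ereal (30 / 29)"
  then have lt: "approx_ratio M < ereal (30/29)" by simp
  have ratio: "OPT xs / cgini xs (M xs) < 30/29" if "valid_profile xs" for xs
  proof -
    have "ereal (OPT xs / cgini xs (M xs)) \<le> approx_ratio M"
      unfolding approx_ratio_def by (rule SUP_upper) (use that in simp)
    then have "ereal (OPT xs / cgini xs (M xs)) < ereal (30/29)" using lt by (rule le_less_trans)
    then show ?thesis by (metis less_ereal.simps(1))
  qed
  define P :: "real list" where "P = [0, 1/2, 1]"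
  define Q1 :: "real list" where "Q1 = [0, 1/2, 3/4]"
  define Q2 :: "real list" where "Q2 = [0, 1/4, 1]"
  have vP: "valid_profile P" and vQ1: "valid_profile Q1" and vQ2: "valid_profile Q2"
    unfolding P_def Q1_def Q2_def valid_profile_def by auto
  have yP: "M P \<in> placements" and yQ1: "M Q1 \<in> placements" and yQ2: "M Q2 \<in> placements"
    using assms(1) vP vQ1 vQ2 unfolding mechanism_def by auto
  have oP: "OPT P \<ge> 1" unfolding P_def
    by (rule OPT_ge1[where yy="(1/4,3/4)"]) (auto simp: placements_def cgini_def gini3 dist_fac_def)
  have oQ1: "OPT Q1 \<ge> 1" unfolding Q1_def
    by (rule OPT_ge1[where yy="(1/8,5/8)"]) (auto simp: placements_def cgini_def gini3 dist_fac_def)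
  have oQ2: "OPT Q2 \<ge> 1" unfolding Q2_def
    by (rule OPT_ge1[where yy="(1/8,7/8)"]) (auto simp: placements_def cgini_def gini3 dist_fac_def)
  have gP: "10*(\<bar>dist_fac 0 (M P) - dist_fac (1/2) (M P)\<bar> + \<bar>dist_fac 0 (M P) - dist_fac 1 (M P)\<bar>
      + \<bar>dist_fac (1/2) (M P) - dist_fac 1 (M P)\<bar>) < 3 - dist_fac 0 (M P) - dist_fac (1/2) (M P) - dist_fac 1 (M P)"
    using good3[of 0 "1/2" 1 "M P"] yP oP ratio[OF vP] mid_lt1[OF yP, of "1/2"] unfolding P_def by simp
  have gQ1: "10*(\<bar>dist_fac 0 (M Q1) - dist_fac (1/2) (M Q1)\<bar> + \<bar>dist_fac 0 (M Q1) - dist_fac (3/4) (M Q1)\<bar>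
      + \<bar>dist_fac (1/2) (M Q1) - dist_fac (3/4) (M Q1)\<bar>) < 3 - dist_fac 0 (M Q1) - dist_fac (1/2) (M Q1) - dist_fac (3/4) (M Q1)"
    using good3[of 0 "1/2" "3/4" "M Q1"] yQ1 oQ1 ratio[OF vQ1] mid_lt1[OF yQ1, of "1/2"] unfolding Q1_def by simp
  have gQ2: "10*(\<bar>dist_fac 0 (M Q2) - dist_fac (1/4) (M Q2)\<bar> + \<bar>dist_fac 0 (M Q2) - dist_fac 1 (M Q2)\<bar>
      + \<bar>dist_fac (1/4) (M Q2) - dist_fac 1 (M Q2)\<bar>) < 3 - dist_fac 0 (M Q2) - dist_fac (1/4) (M Q2) - dist_fac 1 (M Q2)"
    using good3[of 0 "1/4" 1 "M Q2"] yQ2 oQ2 ratio[OF vQ2] mid_lt1[OF yQ2, of "1/4"] unfolding Q2_def by simp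
  have sp1: "dist_fac (3/4) (M Q1) \<le> dist_fac (3/4) (M P)"
    using spec[OF spec[OF spec[OF assms(2)[unfolded strategy_proof_def], of Q1], of 2], of 1] vQ1
    by (simp add: Q1_def P_def)
  have sp2: "dist_fac (1/4) (M Q2) \<le> dist_fac (1/4) (M P)"
    using spec[OF spec[OF spec[OF assms(2)[unfolded strategy_proof_def], of Q2], of 1], of "1/2"] vQ2
    by (simp add: Q2_def P_def)
  have a1: "dist_fac (3/4) (M Q1) > 3/52"
  proof -
    obtain y1 y2 where h: "0 \<le> y1" "y1 \<le> y2" "y2 \<le> 1" "\<And>x. dist_fac x (M Q1) = min \<bar>x-y1\<bar> \<bar>x-y2\<bar>"
      using sortpl[OF yQ1] by blast
    show ?thesis using L1[OF h(1-3) gQ1] h(4) by simp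
  qed
  have a2: "dist_fac (1/4) (M Q2) > 3/52"
  proof -
    obtain y1 y2 where h: "0 \<le> y1" "y1 \<le> y2" "y2 \<le> 1" "\<And>x. dist_fac x (M Q2) = min \<bar>x-y1\<bar> \<bar>x-y2\<bar>"
      using sortpl[OF yQ2] by blast
    show ?thesis using L2[OF h(1-3) gQ2] h(4) by simp
  qed
  obtain y1 y2 where h: "0 \<le> y1" "y1 \<le> y2" "y2 \<le> 1" "\<And>x. dist_fac x (M P) = min \<bar>x-y1\<bar> \<bar>x-y2\<bar>"
    using sortpl[OF yP] by blast
  show False
    using LP[OF h(1-3) gP] h(4) a1 a2 sp1 sp2 by simp
qed

end
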